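(* Let $\phi:\mathbb D\to\mathbb D$ be analytic with $\phi(0)=0$ and $|\phi'(0)|<1$. Then there exists $\rho>0$ such that for all integers $m,n\ge0$, $$|\widehat{\phi^n}(m)|\le\exp\Big(-\tfrac12\big[(1+\rho)n-m\big]\Big),$$ where $\widehat{\phi^n}(m)$ denotes the $m$-th Taylor coefficient of $\phi^n$ at $0$.
   Context: $\mathbb D$ is the open unit disk; $\phi^n$ is the $n$-th power (pointwise product) of $\phi$. *)

theory Defs
  imports "HOL-Complex_Analysis.Complex_Analysis"
begin

definition taylor_coeff :: "(complex \<Rightarrow> complex) \<Rightarrow> nat \<Rightarrow> complex" where
  "taylor_coeff f m = (deriv ^^ m) f 0 / fact m"

end

theory Submission
  imports Defs
begin

theorem mainTheorem10:
  fixes \<phi> :: "complex \<Rightarrow> complex"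
  assumes "\<phi> holomorphic_on ball 0 1"
    and "\<phi> ` ball 0 1 \<subseteq> ball 0 1"
    and "\<phi> 0 = 0"
    and "norm (deriv \<phi> 0) < 1"
  shows "\<exists>\<rho>>0. \<forall>m n :: nat.
           norm (taylor_coeff (\<lambda>z. \<phi> z ^ n) m)
             \<le> exp (- (1/2) * ((1 + \<rho>) * real n - real m))"
proof -
  note hol = assms(1)
  have no: "norm (\<phi> z) < 1" if "norm z < 1" for z
    using assms(2) that by (metis image_subset_iff mem_ball_0)
  have strict: "norm (\<phi> z) < norm z" if z: "norm z < 1" "z \<noteq> 0" for z
  proof (rule ccontr)
    assume "\<not> norm (\<phi> z) < norm z"
    moreover have "norm (\<phi> z) \<le> norm z"
      using Schwarz_Lemma(1)[OF hol assms(3) no z(1)] by blast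
    ultimately have "norm (\<phi> z) = norm z" by simp
    then obtain \<alpha> where \<alpha>: "\<forall>z. norm z < 1 \<longrightarrow> \<phi> z = \<alpha> * z" "norm \<alpha> = 1"
      using Schwarz_Lemma(3)[OF hol assms(3) no, of 0] z by auto
    have ev: "eventually (\<lambda>w. \<phi> w = \<alpha> * w) (nhds 0)"
      using eventually_nhds_in_open[of "ball 0 1" 0] \<alpha>(1)
      by (auto elim!: eventually_mono)
    have "deriv \<phi> 0 = deriv (\<lambda>w. \<alpha> * w) 0"
      by (rule deriv_cong_ev[OF ev refl])
    also have "\<dots> = \<alpha>" by simp
    finally show False using assms(4) \<alpha>(2) by simp
  qed
  define r :: real where "r = exp (-1/2)"
  have r0: "0 < r" and r1: "r < 1" unfolding r_def by auto
  have cmp: "compact (sphere (0::complex) r)" by simp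
  have ne: "sphere (0::complex) r \<noteq> {}" using r0 by simp
  have contphi: "continuous_on (cball 0 r) \<phi>"
    by (rule continuous_on_subset[OF holomorphic_on_imp_continuous_on[OF hol]])
       (use r1 in auto)
  have "continuous_on (sphere 0 r) (\<lambda>z. norm (\<phi> z))"
    by (intro continuous_intros continuous_on_subset[OF contphi]) auto
  then obtain z0 where z0: "z0 \<in> sphere 0 r" "\<forall>y\<in>sphere 0 r. norm (\<phi> y) \<le> norm (\<phi> z0)"
    using continuous_attains_sup[OF cmp ne] by blast
  define c where "c = max (norm (\<phi> z0)) (r/2)"
  have "norm (\<phi> z0) < r"
    using strict[of z0] z0(1) r0 r1 by auto
  hence c_lt: "c < r" and c_pos: "0 < c" using r0 unfolding c_def by auto
  have cbound: "norm (\<phi> y) \<le> c" if "norm y = r" for y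
  proof -
    have "y \<in> sphere 0 r" using that by simp
    hence "norm (\<phi> y) \<le> norm (\<phi> z0)" using z0(2) by blast
    thus ?thesis unfolding c_def by linarith
  qed
  define \<rho> where "\<rho> = -2 * ln c - 1"
  have "ln c < ln r" using c_lt c_pos by simp
  hence "ln c < -1/2" unfolding r_def by simp
  hence rho_pos: "\<rho> > 0" unfolding \<rho>_def by simp
  have c_eq: "c = exp (-(1+\<rho>)/2)" unfolding \<rho>_def using c_pos by simp
  show ?thesis
  proof (intro exI[of _ \<rho>] conjI allI rho_pos)
    fix m n :: nat
    have holn: "(\<lambda>z. \<phi> z ^ n) holomorphic_on ball 0 r"
      using hol r1 by (intro holomorphic_intros) (auto intro: holomorphic_on_subset)
    have contn: "continuous_on (cball 0 r) (\<lambda>z. \<phi> z ^ n)"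
      by (intro continuous_intros contphi)
    have "norm ((deriv ^^ m) (\<lambda>z. \<phi> z ^ n) 0) \<le> fact m * c ^ n / r ^ m"
    proof (rule Cauchy_inequality[OF holn contn r0])
      fix x :: complex assume "norm (0 - x) = r"
      hence "norm (\<phi> x) \<le> c" using cbound by simp
      thus "norm (\<phi> x ^ n) \<le> c ^ n"
        by (simp add: norm_power power_mono)
    qed
    hence "norm (taylor_coeff (\<lambda>z. \<phi> z ^ n) m) \<le> c ^ n / r ^ m"
      unfolding taylor_coeff_def by (simp add: norm_divide field_simps)
    also have "c ^ n / r ^ m = exp (- (1/2) * ((1 + \<rho>) * real n - real m))"
      unfolding c_eq r_def by (simp add: exp_of_nat_mult[symmetric] exp_diff[symmetric]
          field_simps flip: exp_of_nat_mult)
    finally show "norm (taylor_coeff (\<lambda>z. \<phi> z ^ n) m) \<le> exp (- (1/2) * ((1 + \<rho>) * real n - real m))" .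
  qed
qed

end
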